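(* Let $q$ be a prime power and $\mathcal{L}$ a non-empty set of lines of $\mathrm{PG}(n,q)$ satisfying (Pt), (Pl), (Sd) and (To) (see context). Let $M$ be a subspace of $\mathrm{PG}(n,q)$ and let $\ell\in\mathcal{L}$ be a line meeting $M$ in exactly one point. (a) If $\ell$ meets no line of $\mathcal{L}_M$, then $|\mathcal{L}|\ge q|\mathcal{L}_M|+1$. (b) If $\ell$ meets a line $s\in\mathcal{L}_M$ which contains exactly $\alpha$ $(q+1)$-$M$-points, then $|\mathcal{L}|\ge q|\mathcal{L}_M|-\alpha q^2+\alpha q+1\ge q|\mathcal{L}_M|-q^3+q^2+1$.
   Context: (Pt): every point of $\mathrm{PG}(n,q)$ lies on $0$ or $q+1$ lines of $\mathcal{L}$. (Pl): every plane contains $0$, $1$ or $q+1$ lines of $\mathcal{L}$. (Sd): every solid ($3$-dimensional subspace) contains $0$, $1$, $q+1$ or $2q+1$ lines of $\mathcal{L}$. (To): $|\mathcal{L}|\le q^5+q^4+q^3+q^2+q+1$. For a subspace $W$, $\mathcal{L}_W$ denotes the set of lines of $\mathcal{L}$ contained in $W$. A point $P$ is a $(q+1)$-$M$-point if exactly $q+1$ lines of $\mathcal{L}$ pass through $P$ and are contained in $M$. *)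

theory Defs
  imports "HOL-Analysis.Analysis"
begin

text \<open>Model of PG(n,q): the finite field 'a of order q = CARD('a) (any prime power
arises this way), vector space 'a^'m with CARD('m) = n+1.  A projective subspace of
projective dimension k is a linear subspace of (vector) dimension k+1.\<close>

definition psubspace :: "('a::{field,finite}^'m) set \<Rightarrow> bool" where
  "psubspace S \<longleftrightarrow> vec.subspace S"

definition pdim_set :: "nat \<Rightarrow> ('a::{field,finite}^'m) set set" where
  "pdim_set k = {S. vec.subspace S \<and> vec.dim S = k + 1}"

abbreviation ppoints :: "('a::{field,finite}^'m) set set" where "ppoints \<equiv> pdim_set 0"
abbreviation plines :: "('a::{field,finite}^'m) set set" where "plines \<equiv> pdim_set 1"
abbreviation pplanes :: "('a::{field,finite}^'m) set set" where "pplanes \<equiv> pdim_set 2"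
abbreviation psolids :: "('a::{field,finite}^'m) set set" where "psolids \<equiv> pdim_set 3"

definition pmeet :: "('a::{field,finite}^'m) set \<Rightarrow> ('a^'m) set \<Rightarrow> bool" where
  "pmeet U W \<longleftrightarrow> (\<exists>P\<in>ppoints. P \<subseteq> U \<and> P \<subseteq> W)"

definition lines_in :: "('a::{field,finite}^'m) set set \<Rightarrow> ('a^'m) set \<Rightarrow> ('a^'m) set set" where
  "lines_in L W = {l \<in> L. l \<subseteq> W}"

definition cond_Pt :: "('a::{field,finite}^'m) set set \<Rightarrow> bool" where
  "cond_Pt L \<longleftrightarrow> (\<forall>P\<in>ppoints. card {l\<in>L. P \<subseteq> l} \<in> {0, CARD('a) + 1})"

definition cond_Pl :: "('a::{field,finite}^'m) set set \<Rightarrow> bool" where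
  "cond_Pl L \<longleftrightarrow> (\<forall>E\<in>pplanes. card (lines_in L E) \<in> {0, 1, CARD('a) + 1})"

definition cond_Sd :: "('a::{field,finite}^'m) set set \<Rightarrow> bool" where
  "cond_Sd L \<longleftrightarrow> (\<forall>S\<in>psolids. card (lines_in L S) \<in> {0, 1, CARD('a) + 1, 2 * CARD('a) + 1})"

definition cond_To :: "('a::{field,finite}^'m) set set \<Rightarrow> bool" where
  "cond_To L \<longleftrightarrow> (let q = CARD('a) in card L \<le> q^5 + q^4 + q^3 + q^2 + q + 1)"

definition qM_points :: "('a::{field,finite}^'m) set set \<Rightarrow> ('a^'m) set \<Rightarrow> ('a^'m) set set" where
  "qM_points L M = {P\<in>ppoints. card {l \<in> lines_in L M. P \<subseteq> l} = CARD('a) + 1}"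

end

theory Submission
  imports Defs
begin


lemma q_ge2: "CARD('a::{field,finite}) \<ge> 2"
proof -
  have "card {0::'a,1} \<le> CARD('a)" by (rule card_mono) auto
  thus ?thesis by simp
qed

lemma dimsum:
  fixes S T :: "('a::field^'m) set"
  assumes "vec.subspace S" "vec.subspace T"
  shows "vec.dim (vec.span (S \<union> T)) + vec.dim (S \<inter> T) = vec.dim S + vec.dim T"
proof -
  have e: "vec.span S = S" "vec.span T = T" using assms by (auto simp: vec.span_eq_iff)
  show ?thesis using vec.dim_sums_Int[OF assms] vec.span_Un[of S T] unfolding e by simp
qed




abbreviation sp :: "('a::field^'m) set \<Rightarrow> ('a^'m) set \<Rightarrow> ('a^'m) set" where
  "sp A B \<equiv> vec.span (A \<union> B)"

lemma pdimD: "S \<in> pdim_set k \<Longrightarrow> vec.subspace S \<and> vec.dim S = k + 1"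
  by (simp add: pdim_set_def)

lemma pdimI: "vec.subspace S \<Longrightarrow> vec.dim S = k + 1 \<Longrightarrow> S \<in> pdim_set k"
  by (simp add: pdim_set_def)

lemma span_scale_eq:
  fixes w :: "'a::field^'m"
  assumes "c \<noteq> 0" shows "vec.span {c *s w} = vec.span {w}"
proof -
  have "w = inverse c *s (c *s w)" using assms by (simp add: vector_smult_assoc)
  hence "w \<in> vec.span {c *s w}" by (metis vec.span_base vec.span_scale singletonI)
  moreover have "c *s w \<in> vec.span {w}" by (simp add: vec.span_base vec.span_scale)
  ultimately show ?thesis by (simp add: vec.span_eq)
qed

lemma span1_pt:
  fixes v :: "'a::{field,finite}^'m"
  assumes "v \<noteq> 0" shows "vec.span {v} \<in> ppoints"
proof -
  have "vec.independent {v}" using assms by simp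
  hence "vec.dim (vec.span {v}) = 1" by (simp add: vec.dim_span_eq_card_independent)
  thus ?thesis by (simp add: pdim_set_def)
qed

lemma pt_char:
  fixes P :: "('a::{field,finite}^'m) set"
  assumes "P \<in> ppoints" shows "\<exists>v. v \<noteq> 0 \<and> P = vec.span {v}"
proof -
  from assms have sP: "vec.subspace P" and dP: "vec.dim P = 1" by (auto simp: pdim_set_def)
  obtain B where B: "B \<subseteq> P" "vec.independent B" "P \<subseteq> vec.span B" "card B = vec.dim P"
    using vec.basis_exists by blast
  then obtain v where v: "B = {v}" using dP by (auto simp: card_1_singleton_iff)
  have "vec.span B \<subseteq> P" using B sP by (simp add: vec.span_minimal)
  hence "P = vec.span {v}" using B v by auto
  moreover have "v \<noteq> 0" using B v by auto
  ultimately show ?thesis by blast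
qed

lemma dim_ge1:
  fixes A :: "('a::field^'m) set"
  assumes "vec.subspace A" "v \<in> A" "v \<noteq> 0" shows "vec.dim A \<ge> 1"
proof -
  have "vec.span {v} \<subseteq> A" using assms by (simp add: vec.span_minimal)
  hence "vec.dim (vec.span {v}) \<le> vec.dim A" by (rule vec.dim_subset)
  moreover have "vec.dim (vec.span {v}) = 1" using assms
    by (simp add: vec.dim_span_eq_card_independent)
  ultimately show ?thesis by simp
qed

lemma nonzero_of_dim:
  fixes A :: "('a::field^'m) set"
  assumes "vec.dim A \<ge> 1" shows "\<exists>v\<in>A. v \<noteq> 0"
  using assms vec.dim_eq_0[of A] by (metis not_one_le_zero subsetI singletonI)

lemma eqdim:
  fixes A B :: "('a::field^'m) set"
  assumes "vec.subspace A" "vec.subspace B" "A \<subseteq> B" "vec.dim B \<le> vec.dim A"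
  shows "A = B"
  using vec.subspace_dim_equal[OF assms] .

lemma pdim_eq:
  fixes S T :: "('a::{field,finite}^'m) set"
  assumes "S \<in> pdim_set k" "T \<in> pdim_set k" "S \<subseteq> T" shows "S = T"
  using assms eqdim by (metis order_refl pdimD)

lemma meet_iff:
  fixes A B :: "('a::{field,finite}^'m) set"
  assumes "vec.subspace A" "vec.subspace B"
  shows "pmeet A B \<longleftrightarrow> (\<exists>v. v \<noteq> 0 \<and> v \<in> A \<and> v \<in> B)"
proof
  assume "pmeet A B"
  then obtain P where P: "P \<in> ppoints" "P \<subseteq> A" "P \<subseteq> B" by (auto simp: pmeet_def)
  then obtain v where "v \<noteq> 0" "P = vec.span {v}" using pt_char by blast
  thus "\<exists>v. v \<noteq> 0 \<and> v \<in> A \<and> v \<in> B" using P by (auto intro: vec.span_base)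
next
  assume "\<exists>v. v \<noteq> 0 \<and> v \<in> A \<and> v \<in> B"
  then obtain v where v: "v \<noteq> 0" "v \<in> A" "v \<in> B" by blast
  have "vec.span {v} \<subseteq> A" "vec.span {v} \<subseteq> B" using v assms by (auto simp: vec.span_minimal)
  thus "pmeet A B" using span1_pt[OF v(1)] by (auto simp: pmeet_def)
qed

lemma sp_sub: "vec.subspace (sp A B)" by simp
lemma sp_ub1: "A \<subseteq> sp A B" by (meson Un_subset_iff vec.span_superset)
lemma sp_ub2: "B \<subseteq> sp A B" by (meson Un_subset_iff vec.span_superset)
lemma sp_least: "vec.subspace C \<Longrightarrow> A \<subseteq> C \<Longrightarrow> B \<subseteq> C \<Longrightarrow> sp A B \<subseteq> C"
  by (simp add: vec.span_minimal)

lemma line_meet: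
  fixes a b :: "('a::{field,finite}^'m) set"
  assumes "a \<in> plines" "b \<in> plines" "a \<noteq> b" "v \<noteq> 0" "v \<in> a" "v \<in> b"
  shows "a \<inter> b \<in> ppoints" "sp a b \<in> pplanes"
proof -
  have sa: "vec.subspace a" and da: "vec.dim a = 2" and sb: "vec.subspace b" and db: "vec.dim b = 2"
    using assms by (auto simp: pdim_set_def)
  have si: "vec.subspace (a \<inter> b)" using sa sb by (rule vec.subspace_inter)
  have ge: "vec.dim (a \<inter> b) \<ge> 1" using dim_ge1[OF si, of v] assms by auto
  have "vec.dim (a \<inter> b) < 2"
  proof (rule ccontr)
    assume "\<not> ?thesis"
    hence "a \<inter> b = a" "a \<inter> b = b" using eqdim[OF si sa] eqdim[OF si sb] da db by auto
    thus False using assms by auto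
  qed
  hence d1: "vec.dim (a \<inter> b) = 1" using ge by simp
  thus "a \<inter> b \<in> ppoints" using si by (simp add: pdim_set_def)
  have "vec.dim (sp a b) = 3" using dimsum[OF sa sb] d1 da db by simp
  thus "sp a b \<in> pplanes" by (simp add: pdim_set_def)
qed

lemma skew_dim:
  fixes a b :: "('a::field^'m) set"
  assumes "vec.subspace a" "vec.subspace b" "a \<inter> b \<subseteq> {0}"
  shows "vec.dim (sp a b) = vec.dim a + vec.dim b"
proof -
  have "vec.dim (a \<inter> b) = 0" using assms(3) by simp
  thus ?thesis using dimsum[OF assms(1,2)] by linarith
qed

lemma two_pts_line:
  fixes P Q :: "('a::{field,finite}^'m) set"
  assumes "P \<in> ppoints" "Q \<in> ppoints" "P \<noteq> Q"
  shows "sp P Q \<in> plines"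
proof -
  have sP: "vec.subspace P" "vec.dim P = 1" and sQ: "vec.subspace Q" "vec.dim Q = 1"
    using assms by (auto simp: pdim_set_def)
  have si: "vec.subspace (P \<inter> Q)" using sP sQ by (simp add: vec.subspace_inter)
  have "vec.dim (P \<inter> Q) = 0"
  proof (rule ccontr)
    assume "\<not> ?thesis"
    hence "vec.dim (P \<inter> Q) \<ge> 1" by linarith
    hence "P \<inter> Q = P" "P \<inter> Q = Q" using eqdim[OF si sP(1)] eqdim[OF si sQ(1)] sP sQ by auto
    thus False using assms by auto
  qed
  hence "vec.dim (sp P Q) = 2" using dimsum[OF sP(1) sQ(1)] sP sQ by linarith
  thus ?thesis by (intro pdimI) simp_all
qed

lemma line_thru_two:
  fixes P Q t :: "('a::{field,finite}^'m) set"
  assumes "P \<in> ppoints" "Q \<in> ppoints" "P \<noteq> Q" "t \<in> plines" "P \<subseteq> t" "Q \<subseteq> t"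
  shows "t = sp P Q"
proof -
  have "sp P Q \<subseteq> t" using assms by (intro sp_least) (auto simp: pdim_set_def)
  thus ?thesis using pdim_eq[OF two_pts_line[OF assms(1-3)] assms(4)] by simp
qed




lemma points_line_card:
  fixes m :: "('a::{field,finite}^'m) set"
  assumes "m \<in> plines" shows "card {Y \<in> ppoints. Y \<subseteq> m} \<le> CARD('a) + 1"
proof -
  from assms have sm: "vec.subspace m" and dm: "vec.dim m = 2" by (auto simp: pdim_set_def)
  obtain B where B: "B \<subseteq> m" "vec.independent B" "m \<subseteq> vec.span B" "card B = vec.dim m"
    using vec.basis_exists by blast
  then obtain u v where uv: "B = {u,v}" using dm by (auto simp: card_2_iff)
  have mspan: "m \<subseteq> vec.span (insert v {u})" using B uv by (simp add: insert_commute)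
  have key: "{Y \<in> ppoints. Y \<subseteq> m} \<subseteq> insert (vec.span {u}) (range (\<lambda>c. vec.span {c *s u + v}))"
  proof
    fix Y assume Y: "Y \<in> {Y \<in> ppoints. Y \<subseteq> m}"
    then obtain w where w: "w \<noteq> 0" "Y = vec.span {w}" using pt_char by blast
    hence "w \<in> m" using Y by (auto intro: vec.span_base)
    hence "w \<in> vec.span (insert v {u})" using mspan by auto
    then obtain k where "w - k *s v \<in> vec.span {u}" by (auto simp: vec.span_breakdown_eq)
    then obtain c where c: "w - k *s v = c *s u" by (auto simp: vec.span_singleton)
    show "Y \<in> insert (vec.span {u}) (range (\<lambda>c. vec.span {c *s u + v}))"
    proof (cases "k = 0")
      case True
      hence "w = c *s u" using c by simp
      moreover hence "c \<noteq> 0" using w by auto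
      ultimately have "Y = vec.span {u}" using w span_scale_eq by metis
      thus ?thesis by simp
    next
      case False
      have "w = k *s ((c / k) *s u + v)" using c False
        by (simp add: vector_smult_assoc vector_add_ldistrib algebra_simps)
      hence "Y = vec.span {(c / k) *s u + v}" using w span_scale_eq[OF False] by metis
      thus ?thesis by simp
    qed
  qed
  have "card {Y \<in> ppoints. Y \<subseteq> m} \<le> card (insert (vec.span {u}) (range (\<lambda>c. vec.span {c *s u + v})))"
    by (rule card_mono[OF _ key]) simp
  also have "\<dots> \<le> Suc (card (range (\<lambda>c. vec.span {c *s u + v})))"
    by (simp add: card_insert_le_m1 card_insert_if)
  also have "\<dots> \<le> Suc CARD('a)" using card_image_le[of UNIV "(\<lambda>c::'a. vec.span {c *s u + v})"] by simp
  finally show ?thesis by simp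
qed




lemma line_as_span:
  fixes a X :: "('a::{field,finite}^'m) set"
  assumes "a \<in> plines" "X = vec.span {x}" "x \<noteq> 0" "X \<subseteq> a"
  obtains u where "u \<in> a" "u \<notin> X" "a = vec.span {x, u}"
proof -
  have sa: "vec.subspace a" and da: "vec.dim a = 2" using assms by (auto simp: pdim_set_def)
  have dX: "vec.dim X = 1" using span1_pt[OF assms(3)] assms(2) by (simp add: pdim_set_def)
  have "\<not> a \<subseteq> X"
  proof
    assume "a \<subseteq> X" hence "vec.dim a \<le> vec.dim X" by (rule vec.dim_subset)
    thus False using da dX by simp
  qed
  then obtain u where u: "u \<in> a" "u \<notin> X" by blast
  have xa: "x \<in> a" using assms by (auto intro: vec.span_base)
  have ind: "vec.independent (insert u {x})"
    using u assms by (rule_tac vec.independent_insertI) auto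
  have ux: "u \<noteq> x" using u assms by (auto intro: vec.span_base)
  have d2: "vec.dim (vec.span {x, u}) = 2"
    using vec.dim_span_eq_card_independent[OF ind] ux by (simp add: insert_commute)
  have "vec.span {x, u} \<subseteq> a" using xa u sa by (simp add: vec.span_minimal)
  hence "vec.span {x, u} = a" using eqdim[OF _ sa] d2 da by simp
  hence eq: "a = vec.span {x, u}" by simp
  show ?thesis by (rule that[OF u eq])
qed

lemma lines_pt_plane_card:
  fixes X a b :: "('a::{field,finite}^'m) set"
  assumes X: "X \<in> ppoints" and ab: "a \<in> plines" "b \<in> plines" "a \<noteq> b" and sub: "X \<subseteq> a" "X \<subseteq> b"
  shows "card {t \<in> plines. X \<subseteq> t \<and> t \<subseteq> sp a b} \<le> CARD('a) + 1"
proof -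
  obtain x where x: "x \<noteq> 0" "X = vec.span {x}" using pt_char[OF X] by blast
  obtain u where u: "u \<in> a" "u \<notin> X" "a = vec.span {x, u}" using line_as_span[OF ab(1) x(2,1) sub(1)] by blast
  obtain v where v: "v \<in> b" "v \<notin> X" "b = vec.span {x, v}" using line_as_span[OF ab(2) x(2,1) sub(2)] by blast
  let ?W = "vec.span {x, u, v}"
  have piW: "sp a b \<subseteq> ?W" using u v by (intro sp_least) (auto intro!: vec.span_mono)
  have xab: "x \<in> a" "x \<in> b" using x sub by (auto intro: vec.span_base)
  have dpi: "vec.dim (sp a b) = 3" using line_meet(2)[OF ab x(1) xab] by (simp add: pdim_set_def)
  have dW3: "vec.dim ?W \<ge> 3" using vec.dim_subset[OF piW] dpi by simp
  let ?m = "vec.span {u, v}"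
  have dm2: "vec.dim ?m \<le> 2"
  proof -
    have "vec.dim ?m \<le> card {u,v}" by (rule vec.dim_le_card) auto
    also have "card {u,v} \<le> 2" by (simp add: card_insert_if)
    finally show ?thesis .
  qed
  have xm: "x \<notin> ?m"
  proof
    assume "x \<in> ?m"
    hence "?W = ?m" by (simp add: vec.span_redundant)
    thus False using dW3 dm2 by simp
  qed
  have dW: "vec.dim ?W = vec.dim ?m + 1" using xm vec.dim_insert[of x "{u,v}"] by simp
  have dm: "vec.dim ?m = 2" using dW dW3 dm2 vec.dim_subset_UNIV by linarith
  have mline: "?m \<in> plines" using dm by (intro pdimI) simp_all
  have "{t \<in> plines. X \<subseteq> t \<and> t \<subseteq> sp a b} \<subseteq> (\<lambda>Y. sp X Y) ` {Y \<in> ppoints. Y \<subseteq> ?m}"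
  proof
    fix t assume t: "t \<in> {t \<in> plines. X \<subseteq> t \<and> t \<subseteq> sp a b}"
    hence st: "vec.subspace t" "vec.dim t = 2" by (auto simp: pdim_set_def)
    have "sp t ?m \<subseteq> ?W" using t piW by (intro sp_least) (auto intro!: vec.span_mono)
    hence "vec.dim (sp t ?m) \<le> vec.dim ?W" by (rule vec.dim_subset)
    hence "vec.dim (sp t ?m) \<le> 3" using dW dm by linarith
    hence "vec.dim (t \<inter> ?m) \<ge> 1" using dimsum[OF st(1) vec.subspace_span[of "{u,v}"]] st dm by linarith
    then obtain w where w: "w \<in> t \<inter> ?m" "w \<noteq> 0" using nonzero_of_dim by blast
    let ?Y = "vec.span {w}"
    have Ypt: "?Y \<in> ppoints" using span1_pt[OF w(2)] .
    have Ym: "?Y \<subseteq> ?m" using w by (simp add: vec.span_minimal)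
    have Yt: "?Y \<subseteq> t" using w st by (simp add: vec.span_minimal)
    have "?Y \<noteq> X" using xm Ym x by (auto intro: vec.span_base)
    hence "t = sp X ?Y" using line_thru_two[OF X Ypt _ _ _ Yt] t by auto
    thus "t \<in> (\<lambda>Y. sp X Y) ` {Y \<in> ppoints. Y \<subseteq> ?m}" using Ypt Ym by blast
  qed
  hence "card {t \<in> plines. X \<subseteq> t \<and> t \<subseteq> sp a b} \<le> card ((\<lambda>Y. sp X Y) ` {Y \<in> ppoints. Y \<subseteq> ?m})"
    by (intro card_mono) auto
  also have "\<dots> \<le> card {Y \<in> ppoints. Y \<subseteq> ?m}" by (rule card_image_le) simp
  also have "\<dots> \<le> CARD('a) + 1" by (rule points_line_card[OF mline])
  finally show ?thesis .
qed




lemma planes_meet_line: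
  fixes E F a t :: "('a::{field,finite}^'m) set"
  assumes "E \<in> pplanes" "F \<in> pplanes" "E \<noteq> F" "a \<in> plines" "t \<in> plines"
    "a \<subseteq> E" "a \<subseteq> F" "t \<subseteq> E" "t \<subseteq> F"
  shows "t = a"
proof -
  have sE: "vec.subspace E" "vec.dim E = 3" and sF: "vec.subspace F" "vec.dim F = 3"
    using assms by (auto simp: pdim_set_def)
  have sI: "vec.subspace (E \<inter> F)" using sE sF by (simp add: vec.subspace_inter)
  have "E \<inter> F \<noteq> E"
  proof
    assume "E \<inter> F = E" hence "E \<subseteq> F" by blast
    thus False using pdim_eq[OF assms(1,2)] assms(3) by blast
  qed
  hence "vec.dim (E \<inter> F) < 3"
    using eqdim[OF sI sE(1)] sE by (metis Int_lower1 not_less)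
  moreover have sa: "vec.subspace a" "vec.dim a = 2" and st: "vec.subspace t" "vec.dim t = 2"
    using assms by (auto simp: pdim_set_def)
  ultimately have "a = E \<inter> F" "t = E \<inter> F" using eqdim[OF sa(1) sI] eqdim[OF st(1) sI] assms by auto
  thus ?thesis by simp
qed

locale LS =
  fixes L :: "('a::{field,finite}^'m) set set"
  assumes Lsub: "L \<subseteq> plines" and Pt: "cond_Pt L" and Pl: "cond_Pl L" and Sd: "cond_Sd L"
begin

lemma ptcard:
  assumes "X \<in> ppoints" "t \<in> L" "X \<subseteq> t"
  shows "card {c \<in> L. X \<subseteq> c} = CARD('a) + 1"
proof -
  have "card {c \<in> L. X \<subseteq> c} \<noteq> 0" using assms by (auto simp: card_eq_0_iff)
  thus ?thesis using Pt assms(1) by (auto simp: cond_Pt_def)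
qed

lemma plane2:
  assumes "E \<in> pplanes" "a \<in> L" "b \<in> L" "a \<noteq> b" "a \<subseteq> E" "b \<subseteq> E"
  shows "card (lines_in L E) = CARD('a) + 1"
proof -
  have "{a,b} \<subseteq> lines_in L E" using assms by (auto simp: lines_in_def)
  hence "card {a,b} \<le> card (lines_in L E)" by (intro card_mono) auto
  hence "card (lines_in L E) \<ge> 2" using assms by simp
  thus ?thesis using Pl assms(1) by (auto simp: cond_Pl_def)
qed

lemma coplanar:
  assumes X: "X \<in> ppoints" and abc: "a \<in> L" "b \<in> L" "c \<in> L" and sub: "X \<subseteq> a" "X \<subseteq> b" "X \<subseteq> c"
    and ab: "a \<noteq> b"
  shows "c \<subseteq> sp a b"
proof (rule ccontr)
  assume nc: "\<not> c \<subseteq> sp a b"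
  let ?q = "CARD('a)"
  have q2: "?q \<ge> 2" by (rule q_ge2)
  obtain x where x: "x \<noteq> 0" "X = vec.span {x}" using pt_char[OF X] by blast
  have xin: "x \<in> a" "x \<in> b" "x \<in> c" using x sub by (auto intro: vec.span_base)
  have lines: "a \<in> plines" "b \<in> plines" "c \<in> plines" using abc Lsub by auto
  have ca: "c \<noteq> a" and cb: "c \<noteq> b" using nc sp_ub1[of a b] sp_ub2[of b a] by auto
  have Pab: "sp a b \<in> pplanes" using line_meet(2)[OF lines(1,2) ab x(1) xin(1,2)] .
  have Pac: "sp a c \<in> pplanes" using line_meet(2)[OF lines(1,3) ca[symmetric] x(1) xin(1,3)] .
  have Pbc: "sp b c \<in> pplanes" using line_meet(2)[OF lines(2,3) cb[symmetric] x(1) xin(2,3)] .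
  let ?S = "sp (sp a b) c"
  have sPab: "vec.subspace (sp a b)" "vec.dim (sp a b) = 3" using Pab by (auto simp: pdim_set_def)
  have sc: "vec.subspace c" "vec.dim c = 2" using lines by (auto simp: pdim_set_def)
  have sI: "vec.subspace (sp a b \<inter> c)" using sPab sc by (simp add: vec.subspace_inter)
  have "vec.dim (sp a b \<inter> c) \<ge> 1" using dim_ge1[OF sI, of x] xin x sp_ub1[of a b] by auto
  moreover have "vec.dim (sp a b \<inter> c) < 2"
  proof (rule ccontr)
    assume "\<not> ?thesis"
    hence "sp a b \<inter> c = c" using eqdim[OF sI sc(1)] sc by auto
    thus False using nc by blast
  qed
  ultimately have "vec.dim (sp a b \<inter> c) = 1" by simp
  hence "vec.dim ?S = 4" using dimsum[OF sPab(1) sc(1)] sPab sc by linarith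
  hence Ssol: "?S \<in> psolids" by (intro pdimI) simp_all
  have s1: "sp a b \<subseteq> ?S" by (rule sp_ub1)
  have aS: "a \<subseteq> ?S" using sp_ub1[of a b] s1 by (rule subset_trans)
  have bS: "b \<subseteq> ?S" using sp_ub2[of b a] s1 by (rule subset_trans)
  have cS: "c \<subseteq> ?S" by (rule sp_ub2)
  note abS = aS bS cS
  have PS: "sp a b \<subseteq> ?S" "sp a c \<subseteq> ?S" "sp b c \<subseteq> ?S"
    by (rule s1, rule sp_least[OF vec.subspace_span aS cS], rule sp_least[OF vec.subspace_span bS cS])
  define A where "A = lines_in L (sp a b)"
  define B where "B = lines_in L (sp a c)"
  define C where "C = lines_in L (sp b c)"
  have cA: "card A = ?q + 1" unfolding A_def
    using plane2[OF Pab abc(1,2) ab sp_ub1 sp_ub2] .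
  have cB: "card B = ?q + 1" unfolding B_def
    using plane2[OF Pac abc(1,3) ca[symmetric] sp_ub1 sp_ub2] .
  have cC: "card C = ?q + 1" unfolding C_def
    using plane2[OF Pbc abc(2,3) cb[symmetric] sp_ub1 sp_ub2] .
  have inB: "a \<in> B" unfolding B_def lines_in_def using abc sp_ub1 by auto
  have inC: "b \<in> C" "c \<in> C" unfolding C_def lines_in_def using abc sp_ub1[of b c] sp_ub2[of c b] by auto
  have ne1: "sp a b \<noteq> sp a c" using nc sp_ub2[of c a] by auto
  have ne2: "sp a b \<noteq> sp b c" using nc sp_ub2[of c b] by auto
  have ne3: "sp a c \<noteq> sp b c"
  proof
    assume eq: "sp a c = sp b c"
    hence "b \<subseteq> sp a c" using sp_ub1[of b c] by simp
    hence "sp a b \<subseteq> sp a c" using sp_ub1[of a c] by (intro sp_least) auto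
    hence "sp a b = sp a c" using pdim_eq[OF Pab Pac] by simp
    thus False using ne1 by simp
  qed
  have AB: "A \<inter> B \<subseteq> {a}"
  proof
    fix t assume "t \<in> A \<inter> B"
    hence "t \<in> L" "t \<subseteq> sp a b" "t \<subseteq> sp a c" unfolding A_def B_def lines_in_def by auto
    thus "t \<in> {a}" using planes_meet_line[OF Pab Pac ne1 lines(1) _ sp_ub1[of a b] sp_ub1[of a c]] Lsub by auto
  qed
  have AC: "A \<inter> C \<subseteq> {b}"
  proof
    fix t assume "t \<in> A \<inter> C"
    hence "t \<in> L" "t \<subseteq> sp a b" "t \<subseteq> sp b c" unfolding A_def C_def lines_in_def by auto
    thus "t \<in> {b}" using planes_meet_line[OF Pab Pbc ne2 lines(2) _ sp_ub2[of b a] sp_ub1[of b c]] Lsub by auto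
  qed
  have BC: "B \<inter> C \<subseteq> {c}"
  proof
    fix t assume "t \<in> B \<inter> C"
    hence "t \<in> L" "t \<subseteq> sp a c" "t \<subseteq> sp b c" unfolding B_def C_def lines_in_def by auto
    thus "t \<in> {c}" using planes_meet_line[OF Pac Pbc ne3 lines(3) _ sp_ub2[of c a] sp_ub2[of c b]] Lsub by auto
  qed
  have fin: "finite A" "finite B" "finite C" by auto
  have c1: "card (B - {a}) = ?q" using cB inB fin by simp
  have c2: "card (C - {b, c}) = ?q - 1" using cC inC fin cb by (simp add: card_Diff_subset)
  have d1: "A \<inter> (B - {a}) = {}" using AB by blast
  have d2: "(A \<union> (B - {a})) \<inter> (C - {b, c}) = {}" using AC BC by blast
  have "card (A \<union> (B - {a}) \<union> (C - {b, c})) = card A + card (B - {a}) + card (C - {b,c})"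
    using d1 d2 fin by (simp add: card_Un_disjoint)
  also have "\<dots> = 3 * ?q" using cA c1 c2 q2 by simp
  finally have cU: "card (A \<union> (B - {a}) \<union> (C - {b, c})) = 3 * ?q" .
  have "A \<union> (B - {a}) \<union> (C - {b, c}) \<subseteq> lines_in L ?S"
    unfolding A_def B_def C_def lines_in_def using PS by auto
  hence "3 * ?q \<le> card (lines_in L ?S)" using cU by (metis card_mono finite)
  moreover have "card (lines_in L ?S) \<le> 2 * ?q + 1" using Sd Ssol by (auto simp: cond_Sd_def)
  ultimately show False using q2 by simp
qed

lemma pencil:
  assumes X: "X \<in> ppoints" and ab: "a \<in> L" "b \<in> L" "a \<noteq> b" "X \<subseteq> a" "X \<subseteq> b"
    and t: "t \<in> plines" "X \<subseteq> t" "t \<subseteq> sp a b"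
  shows "t \<in> L"
proof -
  let ?F = "{c \<in> L. X \<subseteq> c}"
  let ?G = "{t \<in> plines. X \<subseteq> t \<and> t \<subseteq> sp a b}"
  have FG: "?F \<subseteq> ?G" using coplanar[OF X ab(1,2) _ ab(4,5) _ ab(3)] Lsub by auto
  have "card ?G \<le> CARD('a) + 1"
    using lines_pt_plane_card[OF X _ _ ab(3-5)] ab Lsub by auto
  also have "\<dots> = card ?F" using ptcard[OF X ab(1,4)] by simp
  finally have "?F = ?G" using FG by (intro card_seteq) auto
  thus ?thesis using t by auto
qed

end



lemma Msp:
  fixes M l s :: "('a::field^'m) set"
  assumes "vec.subspace M" "vec.subspace l" "vec.subspace s" "s \<subseteq> M"
  shows "M \<inter> sp l s \<subseteq> sp (l \<inter> M) s"
proof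
  fix w assume w: "w \<in> M \<inter> sp l s"
  have e: "vec.span l = l" "vec.span s = s" using assms by (auto simp: vec.span_eq_iff)
  obtain x y where xy: "w = x + y" "x \<in> l" "y \<in> s" using w vec.span_Un[of l s] unfolding e by auto
  have yM: "y \<in> M" using xy assms by auto
  have "w - y \<in> M" using vec.subspace_diff[OF assms(1)] w yM by auto
  moreover have "x = w - y" using xy by simp
  ultimately have "x \<in> M" by simp
  hence "x \<in> sp (l \<inter> M) s" using xy by (auto intro: vec.span_base)
  moreover have "y \<in> sp (l \<inter> M) s" using xy by (auto intro: vec.span_base)
  ultimately show "w \<in> sp (l \<inter> M) s" using xy by (simp add: vec.span_add)
qed

context LS begin

lemma core_inj:
  assumes sM: "vec.subspace M" and l: "l \<in> L"
    and s1: "s1 \<in> L" "l \<inter> s1 \<subseteq> {0}" "s1 \<subseteq> M" and H1: "\<forall>t\<in>L. t \<subseteq> sp (l \<inter> M) s1 \<longrightarrow> t = s1"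
    and s2: "s2 \<in> L" "s2 \<subseteq> M" "l \<inter> s2 \<subseteq> {0}"
    and t: "t \<in> L" "t \<subseteq> sp l s1" "t \<subseteq> sp l s2" "l \<inter> t \<subseteq> {0}"
  shows "s1 = s2"
proof -
  have lin: "\<And>x. x \<in> L \<Longrightarrow> vec.subspace x \<and> vec.dim x = 2" using Lsub by (auto simp: pdim_set_def)
  have d1: "vec.dim (sp l s1) = 4" using skew_dim[of l s1] lin[OF l] lin[OF s1(1)] s1 by simp
  have d2: "vec.dim (sp l s2) = 4" using skew_dim[of l s2] lin[OF l] lin[OF s2(1)] s2 by simp
  have dt: "vec.dim (sp l t) = 4" using skew_dim[of l t] lin[OF l] lin[OF t(1)] t by simp
  have "sp l t \<subseteq> sp l s1" using t sp_ub1[of l s1] by (intro sp_least) auto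
  hence e1: "sp l t = sp l s1" using eqdim[of "sp l t" "sp l s1"] d1 dt by simp
  have "sp l t \<subseteq> sp l s2" using t sp_ub1[of l s2] by (intro sp_least) auto
  hence e2: "sp l t = sp l s2" using eqdim[of "sp l t" "sp l s2"] d2 dt by simp
  have "s2 \<subseteq> sp l s1" using sp_ub2[of s2 l] e1 e2 by simp
  hence "s2 \<subseteq> M \<inter> sp l s1" using s2 by auto
  also have "\<dots> \<subseteq> sp (l \<inter> M) s1" using Msp[OF sM] lin[OF l] lin[OF s1(1)] s1 by blast
  finally show ?thesis using H1 s2 by auto
qed

lemma core:
  assumes sM: "vec.subspace M" and l: "l \<in> L" and P: "l \<inter> M \<in> ppoints"
    and s: "s \<in> L" "s \<subseteq> M" "l \<inter> s \<subseteq> {0}"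
    and H1: "\<forall>t\<in>L. t \<subseteq> sp (l \<inter> M) s \<longrightarrow> t = s"
  shows "CARD('a) - 1 \<le> card {t\<in>L. t \<subseteq> sp l s \<and> l \<inter> t \<subseteq> {0} \<and> \<not> t \<subseteq> M}"
proof -
  let ?T = "{t\<in>L. t \<subseteq> sp l s \<and> l \<inter> t \<subseteq> {0} \<and> \<not> t \<subseteq> M}"
  have lin: "\<And>x. x \<in> L \<Longrightarrow> vec.subspace x \<and> vec.dim x = 2 \<and> x \<in> plines"
    using Lsub by (auto simp: pdim_set_def)
  have sl: "vec.subspace l" and ss: "vec.subspace s" using lin l s by auto
  show ?thesis
  proof (cases "\<exists>u\<in>L. (\<exists>v. v \<noteq> 0 \<and> v \<in> u \<and> v \<in> l) \<and> (\<exists>w. w \<noteq> 0 \<and> w \<in> u \<and> w \<in> s)")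
    case True
    then obtain u q0 x0 where u: "u \<in> L" and q0: "q0 \<noteq> 0" "q0 \<in> u" "q0 \<in> l"
      and x0: "x0 \<noteq> 0" "x0 \<in> u" "x0 \<in> s" by blast
    let ?Q = "vec.span {q0}" let ?X = "vec.span {x0}"
    have su: "vec.subspace u" using lin u by auto
    have Qpt: "?Q \<in> ppoints" using span1_pt[OF q0(1)] .
    have Xpt: "?X \<in> ppoints" using span1_pt[OF x0(1)] .
    have Ql: "?Q \<subseteq> l" using q0 sl by (simp add: vec.span_minimal)
    have Qu: "?Q \<subseteq> u" using q0 su by (simp add: vec.span_minimal)
    have Xu: "?X \<subseteq> u" using x0 su by (simp add: vec.span_minimal)
    have Xs: "?X \<subseteq> s" using x0 ss by (simp add: vec.span_minimal)
    have QX: "?Q \<noteq> ?X"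
    proof
      assume "?Q = ?X" hence "q0 \<in> s" using Xs vec.span_base[of q0 "{q0}"] by auto
      thus False using q0 s(3) by auto
    qed
    have ueq: "u = sp ?Q ?X" using line_thru_two[OF Qpt Xpt QX _ Qu Xu] lin u by auto
    have q0M: "q0 \<notin> M"
    proof
      assume "q0 \<in> M"
      hence "?Q \<subseteq> l \<inter> M" using q0 sl sM by (simp add: vec.span_minimal vec.subspace_inter)
      hence QP: "?Q = l \<inter> M" using pdim_eq[OF Qpt P] by simp
      have "u \<subseteq> sp (l \<inter> M) s" unfolding ueq QP
        using sp_ub1[of "l \<inter> M" s] Xs sp_ub2[of s "l \<inter> M"] by (intro sp_least) auto
      hence "u = s" using H1 u by auto
      thus False using q0 s(3) by auto
    qed
    have subq: "{q0} \<subseteq> insert q0 s" "{x0} \<subseteq> insert q0 s" using x0 by auto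
    let ?Pi = "vec.span (insert q0 s)"
    have uPi: "u \<subseteq> ?Pi" unfolding ueq
      using vec.span_mono[OF subq(1)] vec.span_mono[OF subq(2)] by (intro sp_least) auto
    have sPi: "s \<subseteq> ?Pi" using vec.span_superset[of "insert q0 s"] by auto
    have PiS: "?Pi \<subseteq> sp l s"
    proof (rule vec.span_minimal)
      show "insert q0 s \<subseteq> sp l s" using q0 sp_ub1[of l s] sp_ub2[of s l] by auto
    qed simp
    have es: "vec.span s = s" using ss by (simp add: vec.span_eq_iff)
    have decomp: "\<And>w. w \<in> ?Pi \<Longrightarrow> \<exists>k. w - k *s q0 \<in> s"
      using vec.span_breakdown_eq[of _ q0 s] es by auto
    let ?F = "{c\<in>L. ?X \<subseteq> c}"
    have cF: "card ?F = CARD('a) + 1" using ptcard[OF Xpt s(1) Xs] .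
    have su_ne: "s \<noteq> u" using q0M q0 s by auto
    have inF: "s \<in> ?F" "u \<in> ?F" using s u Xs Xu by auto
    have cF2: "card (?F - {s, u}) = CARD('a) - 1"
      using cF inF su_ne by (simp add: card_Diff_subset)
    have FT: "?F - {s, u} \<subseteq> ?T"
    proof
      fix t assume "t \<in> ?F - {s, u}"
      hence t: "t \<in> L" "?X \<subseteq> t" "t \<noteq> s" "t \<noteq> u" by auto
      have st: "vec.subspace t" using lin t by auto
      have "t \<subseteq> sp s u" using coplanar[OF Xpt s(1) u t(1) Xs Xu t(2) su_ne] .
      also have "sp s u \<subseteq> ?Pi" using sPi uPi by (intro sp_least) auto
      finally have tPi: "t \<subseteq> ?Pi" .
      have lt: "l \<inter> t \<subseteq> {0}"
      proof
        fix w assume w: "w \<in> l \<inter> t"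
        obtain k where k: "w - k *s q0 \<in> s" using decomp tPi w by auto
        have "w - k *s q0 \<in> l" using w q0 sl by (simp add: vec.subspace_diff vec.subspace_scale)
        hence wk: "w = k *s q0" using k s(3) by auto
        show "w \<in> {0}"
        proof (cases "k = 0")
          case True thus ?thesis using wk by simp
        next
          case False
          have "inverse k *s w = q0" using wk False by (simp add: vector_smult_assoc)
          hence "q0 \<in> t" using w st by (metis IntD2 vec.subspace_scale)
          hence "?Q \<subseteq> t" using st by (simp add: vec.span_minimal)
          hence "t = u" using line_thru_two[OF Qpt Xpt QX _ _ t(2)] lin t ueq by auto
          thus ?thesis using t by simp
        qed
      qed
      have tM: "\<not> t \<subseteq> M"
      proof
        assume tM: "t \<subseteq> M"
        have "t \<subseteq> s"
        proof
          fix w assume w: "w \<in> t"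
          obtain k where k: "w - k *s q0 \<in> s" using decomp tPi w by auto
          have wM: "w \<in> M" using w tM by auto
          have rM: "w - k *s q0 \<in> M" using k s(2) by auto
          have "w - (w - k *s q0) \<in> M" by (rule vec.subspace_diff[OF sM wM rM])
          hence "k *s q0 \<in> M" by simp
          hence "k = 0"
          proof (rule contrapos_pp)
            assume "k \<noteq> 0"
            hence "inverse k *s (k *s q0) = q0" by (simp add: vector_smult_assoc)
            thus "k *s q0 \<notin> M" using q0M vec.subspace_scale[OF sM] by metis
          qed
          thus "w \<in> s" using k by simp
        qed
        hence "t = s" using pdim_eq lin t s by metis
        thus False using t by simp
      qed
      show "t \<in> ?T" using t tPi PiS lt tM by auto
    qed
    have "card (?F - {s, u}) \<le> card ?T" using FT by (intro card_mono) auto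
    thus ?thesis using cF2 by simp
  next
    case False
    let ?S = "sp l s"
    have dS: "vec.dim ?S = 4" using skew_dim[OF sl ss s(3)] lin l s by simp
    hence Ssol: "?S \<in> psolids" by (intro pdimI) simp_all
    obtain v0 where v0: "v0 \<in> l" "v0 \<noteq> 0" using nonzero_of_dim[of l] lin l by auto
    have ls_ne: "l \<noteq> s" using v0 s(3) by auto
    have inS: "l \<in> lines_in L ?S" "s \<in> lines_in L ?S"
      using l s sp_ub1[of l s] sp_ub2[of s l] by (auto simp: lines_in_def)
    have "card {l, s} \<le> card (lines_in L ?S)" using inS by (intro card_mono) auto
    hence "card (lines_in L ?S) \<ge> 2" using ls_ne by simp
    hence cS: "card (lines_in L ?S) \<ge> CARD('a) + 1" using Sd Ssol by (auto simp: cond_Sd_def)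
    have cS2: "card (lines_in L ?S - {l, s}) \<ge> CARD('a) - 1"
      using cS inS ls_ne by (simp add: card_Diff_subset)
    have ST: "lines_in L ?S - {l, s} \<subseteq> ?T"
    proof
      fix t assume "t \<in> lines_in L ?S - {l, s}"
      hence t: "t \<in> L" "t \<subseteq> ?S" "t \<noteq> l" "t \<noteq> s" by (auto simp: lines_in_def)
      have st: "vec.subspace t" using lin t by auto
      have lt: "l \<inter> t \<subseteq> {0}"
      proof (rule ccontr)
        assume "\<not> ?thesis"
        then obtain w where w: "w \<in> l" "w \<in> t" "w \<noteq> 0" by auto
        let ?Q = "vec.span {w}"
        have Qpt: "?Q \<in> ppoints" using span1_pt[OF w(3)] .
        have Ql: "?Q \<subseteq> l" using w sl by (simp add: vec.span_minimal)
        have Qt: "?Q \<subseteq> t" using w st by (simp add: vec.span_minimal)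
        have pl: "sp l t \<in> pplanes" using line_meet(2)[of l t w] lin l t w by auto
        have spl: "vec.subspace (sp l t)" "vec.dim (sp l t) = 3" using pl by (auto simp: pdim_set_def)
        have plS: "sp l t \<subseteq> ?S" using t sp_ub1[of l s] by (intro sp_least) auto
        have "sp (sp l t) s \<subseteq> ?S" by (rule sp_least[OF vec.subspace_span plS sp_ub2])
        hence "vec.dim (sp (sp l t) s) \<le> 4" using vec.dim_subset dS by metis
        hence "vec.dim (sp l t \<inter> s) \<ge> 1" using dimsum[OF spl(1) ss] spl lin[OF s(1)] by linarith
        then obtain x0 where x0: "x0 \<in> sp l t \<inter> s" "x0 \<noteq> 0" using nonzero_of_dim by blast
        let ?X = "vec.span {x0}"
        have Xpt: "?X \<in> ppoints" using span1_pt[OF x0(2)] .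
        have Xs: "?X \<subseteq> s" using x0 ss by (simp add: vec.span_minimal)
        have Xpl: "?X \<subseteq> sp l t" using x0 by (simp add: vec.span_minimal)
        have QX: "?Q \<noteq> ?X"
        proof
          assume "?Q = ?X" hence "w \<in> s" using Xs vec.span_base[of w "{w}"] by auto
          thus False using w s(3) by auto
        qed
        have vline: "sp ?Q ?X \<in> plines" using two_pts_line[OF Qpt Xpt QX] .
        have vpl: "sp ?Q ?X \<subseteq> sp l t" using Ql sp_ub1[of l t] Xpl by (intro sp_least) auto
        have "sp ?Q ?X \<in> L"
          using pencil[OF Qpt l t(1) t(3)[symmetric] Ql Qt vline sp_ub1 vpl] .
        moreover have "w \<in> sp ?Q ?X" "x0 \<in> sp ?Q ?X"
          using sp_ub1[of ?Q ?X] sp_ub2[of ?X ?Q] vec.span_base[of w "{w}"] vec.span_base[of x0 "{x0}"]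
          by auto
        ultimately show False using False w x0 by blast
      qed
      have tM: "\<not> t \<subseteq> M"
      proof
        assume "t \<subseteq> M"
        hence "t \<subseteq> M \<inter> ?S" using t by auto
        also have "\<dots> \<subseteq> sp (l \<inter> M) s" using Msp[OF sM sl ss s(2)] .
        finally show False using H1 t by auto
      qed
      show "t \<in> ?T" using t lt tM by auto
    qed
    have "card (lines_in L ?S - {l, s}) \<le> card ?T" using ST by (intro card_mono) auto
    thus ?thesis using cS2 by simp
  qed
qed

end



context LS begin

definition TT :: "('a^'m) set \<Rightarrow> ('a^'m) set \<Rightarrow> ('a^'m) set \<Rightarrow> ('a^'m) set set" where
  "TT M l s = {t\<in>L. t \<subseteq> sp l s \<and> l \<inter> t \<subseteq> {0} \<and> \<not> t \<subseteq> M}"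

lemma count_union:
  assumes sM: "vec.subspace M" and l: "l \<in> L" and P: "l \<inter> M \<in> ppoints"
    and G: "\<forall>s\<in>G. s \<in> L \<and> s \<subseteq> M \<and> l \<inter> s \<subseteq> {0} \<and> (\<forall>t\<in>L. t \<subseteq> sp (l \<inter> M) s \<longrightarrow> t = s)"
  shows "(CARD('a) - 1) * card G \<le> card (\<Union>s\<in>G. TT M l s)"
proof -
  have "card (\<Union>s\<in>G. TT M l s) = (\<Sum>s\<in>G. card (TT M l s))"
  proof (rule card_UN_disjoint)
    show "\<forall>i\<in>G. \<forall>j\<in>G. i \<noteq> j \<longrightarrow> TT M l i \<inter> TT M l j = {}"
    proof (intro ballI impI)
      fix i j assume ij: "i \<in> G" "j \<in> G" "i \<noteq> j"
      show "TT M l i \<inter> TT M l j = {}"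
      proof (rule ccontr)
        assume "TT M l i \<inter> TT M l j \<noteq> {}"
        then obtain t where t: "t \<in> TT M l i" "t \<in> TT M l j" by blast
        have "i = j" using core_inj[OF sM l, of i j t] G ij t unfolding TT_def by auto
        thus False using ij by simp
      qed
    qed
  qed auto
  moreover have "card G * (CARD('a) - 1) \<le> (\<Sum>s\<in>G. card (TT M l s))"
    using sum_bounded_below[of G "CARD('a) - 1" "\<lambda>s. card (TT M l s)"] core[OF sM l P] G
    unfolding TT_def by auto
  ultimately show ?thesis by (simp add: mult.commute)
qed

lemma H1_gen:
  assumes sM: "vec.subspace M" and l: "l \<in> L" and P: "l \<inter> M \<in> ppoints"
    and s: "s \<in> L" "s \<subseteq> M" "l \<inter> s \<subseteq> {0}"
    and t: "t \<in> L" "t \<subseteq> sp (l \<inter> M) s" "t \<noteq> s"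
  shows "\<exists>v\<in>L. v \<subseteq> M \<and> l \<inter> M \<subseteq> v \<and> v \<noteq> s \<and> (\<exists>x0. x0 \<noteq> 0 \<and> x0 \<in> v \<and> x0 \<in> s)"
proof -
  let ?P = "l \<inter> M"
  have lin: "\<And>x. x \<in> L \<Longrightarrow> vec.subspace x \<and> vec.dim x = 2 \<and> x \<in> plines"
    using Lsub by (auto simp: pdim_set_def)
  have sP: "vec.subspace ?P" "vec.dim ?P = 1" using P by (auto simp: pdim_set_def)
  have ss: "vec.subspace s" "vec.dim s = 2" and st: "vec.subspace t" "vec.dim t = 2" using lin s t by auto
  have Ps: "?P \<inter> s \<subseteq> {0}" using s(3) by auto
  have dPs: "vec.dim (sp ?P s) = 3" using skew_dim[OF sP(1) ss(1) Ps] sP ss by simp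
  have Pspl: "sp ?P s \<in> pplanes" using dPs by (intro pdimI) simp_all
  have "sp t s \<subseteq> sp ?P s" using t(2) sp_ub2[of s ?P] by (intro sp_least) auto
  hence "vec.dim (sp t s) \<le> 3" using vec.dim_subset dPs by metis
  hence "vec.dim (t \<inter> s) \<ge> 1" using dimsum[OF st(1) ss(1)] st ss by linarith
  then obtain x0 where x0: "x0 \<in> t \<inter> s" "x0 \<noteq> 0" using nonzero_of_dim by blast
  have tspl: "sp t s \<in> pplanes" using line_meet(2)[of t s x0] lin t s x0 by auto
  have tsPs: "sp t s \<subseteq> sp ?P s" using t(2) sp_ub2[of s ?P] by (intro sp_least) auto
  have eqpl: "sp t s = sp ?P s" using pdim_eq[OF tspl Pspl tsPs] .
  let ?X = "vec.span {x0}"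
  have Xpt: "?X \<in> ppoints" using span1_pt[OF x0(2)] .
  have Xs: "?X \<subseteq> s" "?X \<subseteq> t" using x0 ss st by (auto simp: vec.span_minimal)
  have XP: "?P \<noteq> ?X"
  proof
    assume "?P = ?X" hence "x0 \<in> ?P" using vec.span_base[of x0 "{x0}"] by auto
    thus False using x0 s(3) by auto
  qed
  have vline: "sp ?P ?X \<in> plines" using two_pts_line[OF P Xpt XP] .
  have vsub: "sp ?P ?X \<subseteq> sp ?P s" using sp_ub1[of ?P s] Xs(1) sp_ub2[of s ?P] by (intro sp_least) auto
  have "sp ?P ?X \<in> L"
    using pencil[OF Xpt t(1) s(1) t(3) Xs(2) Xs(1) vline sp_ub2] vsub eqpl by simp
  moreover have PsubM: "sp ?P s \<subseteq> M" using sM s(2) by (intro sp_least) auto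
  moreover have "?P \<subseteq> sp ?P ?X" by (rule sp_ub1)
  moreover have "x0 \<in> sp ?P ?X" using sp_ub2[of ?X ?P] vec.span_base[of x0 "{x0}"] by auto
  moreover have "sp ?P ?X \<noteq> s"
  proof
    assume "sp ?P ?X = s" hence "?P \<subseteq> s" using sp_ub1[of ?P ?X] by simp
    thus False using Ps sP by (metis Int_absorb2 dim_eq_0 one_neq_zero vec.dim_eq_0)
  qed
  ultimately show ?thesis using vsub x0 by blast
qed

end



lemma card_ins_le: "card (insert x A) \<le> Suc (card A)"
  by (cases "finite A") (auto simp: card_insert_if)

theorem proposition3:
  fixes L :: "('a::{field,finite}^'m) set set"
    and M l :: "('a^'m) set"
  assumes "L \<subseteq> plines" and "L \<noteq> {}"
    and "cond_Pt L" and "cond_Pl L" and "cond_Sd L" and "cond_To L"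
    and "psubspace M"
    and "l \<in> L" and "l \<inter> M \<in> ppoints"
  shows "(\<not> (\<exists>s\<in>lines_in L M. pmeet l s) \<longrightarrow>
            card L \<ge> CARD('a) * card (lines_in L M) + 1)
       \<and> (\<forall>s \<alpha>. s \<in> lines_in L M \<and> pmeet l s \<and> card {P \<in> qM_points L M. P \<subseteq> s} = \<alpha> \<longrightarrow>
            int (card L) \<ge> int CARD('a) * int (card (lines_in L M)) - int \<alpha> * int CARD('a)^2
                            + int \<alpha> * int CARD('a) + 1
          \<and> int CARD('a) * int (card (lines_in L M)) - int \<alpha> * int CARD('a)^2
                            + int \<alpha> * int CARD('a) + 1
            \<ge> int CARD('a) * int (card (lines_in L M)) - int CARD('a)^3 + int CARD('a)^2 + 1)"
proof -
  interpret LS L using assms by unfold_locales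
  note l = assms(8) and P = assms(9)
  have sM: "vec.subspace M" using assms(7) by (simp add: psubspace_def)
  let ?P = "l \<inter> M"
  let ?q = "CARD('a)"
  let ?LM = "lines_in L M"
  have q2: "?q \<ge> 2" by (rule q_ge2)
  have lin: "\<And>x. x \<in> L \<Longrightarrow> vec.subspace x \<and> vec.dim x = 2 \<and> x \<in> plines"
    using Lsub by (auto simp: pdim_set_def)
  have sl: "vec.subspace l" using lin l by auto
  have sP: "vec.subspace ?P" "vec.dim ?P = 1" using P by (auto simp: pdim_set_def)
  have lM: "\<not> l \<subseteq> M"
  proof
    assume "l \<subseteq> M" hence "?P = l" by auto
    thus False using sP lin l by simp
  qed
  have Pl: "?P \<subseteq> l" by auto
  obtain p0 where p0: "p0 \<in> ?P" "p0 \<noteq> 0" using nonzero_of_dim[of ?P] sP by auto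
  have lnLM: "l \<notin> ?LM" using lM by (auto simp: lines_in_def)
  have fin: "\<And>X :: ('a^'m) set set. finite X" by simp
  have partA: "\<not> (\<exists>s\<in>?LM. pmeet l s) \<longrightarrow> card L \<ge> ?q * card ?LM + 1"
  proof
    assume nm: "\<not> (\<exists>s\<in>?LM. pmeet l s)"
    have G: "\<forall>s\<in>?LM. s \<in> L \<and> s \<subseteq> M \<and> l \<inter> s \<subseteq> {0} \<and> (\<forall>t\<in>L. t \<subseteq> sp ?P s \<longrightarrow> t = s)"
    proof
      fix s assume s: "s \<in> ?LM"
      hence sL: "s \<in> L" "s \<subseteq> M" by (auto simp: lines_in_def)
      have ls: "l \<inter> s \<subseteq> {0}"
        using nm s meet_iff[OF sl, of s] lin[OF sL(1)] by auto
      have "\<forall>t\<in>L. t \<subseteq> sp ?P s \<longrightarrow> t = s"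
      proof (intro ballI impI)
        fix t assume t: "t \<in> L" "t \<subseteq> sp ?P s"
        show "t = s"
        proof (rule ccontr)
          assume "t \<noteq> s"
          then obtain v where v: "v \<in> L" "v \<subseteq> M" "?P \<subseteq> v"
            using H1_gen[OF sM l P sL ls t] by blast
          have "pmeet l v" using v P unfolding pmeet_def by blast
          thus False using nm v by (auto simp: lines_in_def)
        qed
      qed
      thus "s \<in> L \<and> s \<subseteq> M \<and> l \<inter> s \<subseteq> {0} \<and> (\<forall>t\<in>L. t \<subseteq> sp ?P s \<longrightarrow> t = s)"
        using sL ls by blast
    qed
    let ?U = "\<Union>s\<in>?LM. TT M l s"
    have cU: "(?q - 1) * card ?LM \<le> card ?U" using count_union[OF sM l P G] .
    have UL: "?U \<subseteq> L" by (auto simp: TT_def)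
    have U1: "?U \<inter> ?LM = {}" by (auto simp: TT_def lines_in_def)
    have U2: "l \<notin> ?U" using p0 by (auto simp: TT_def)
    have "card (?LM \<union> insert l ?U) = card ?LM + Suc (card ?U)"
      using U1 U2 lnLM by (subst card_Un_disjoint) auto
    moreover have "?LM \<union> insert l ?U \<subseteq> L" using UL l by (auto simp: lines_in_def)
    ultimately have "card ?LM + Suc (card ?U) \<le> card L" by (metis card_mono fin)
    moreover have "?q * card ?LM = card ?LM + (?q - 1) * card ?LM"
    proof -
      obtain k where k: "?q = Suc k" using q2 by (cases ?q) auto
      show ?thesis unfolding k by simp
    qed
    ultimately show "card L \<ge> ?q * card ?LM + 1" using cU by linarith
  qed
  have partB: "\<forall>s \<alpha>. s \<in> ?LM \<and> pmeet l s \<and> card {P \<in> qM_points L M. P \<subseteq> s} = \<alpha> \<longrightarrow>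
            int (card L) \<ge> int ?q * int (card ?LM) - int \<alpha> * int ?q^2 + int \<alpha> * int ?q + 1
          \<and> int ?q * int (card ?LM) - int \<alpha> * int ?q^2 + int \<alpha> * int ?q + 1
            \<ge> int ?q * int (card ?LM) - int ?q^3 + int ?q^2 + 1"
  proof (intro allI impI)
    fix s \<alpha> assume asm: "s \<in> ?LM \<and> pmeet l s \<and> card {P \<in> qM_points L M. P \<subseteq> s} = \<alpha>"
    hence sLM: "s \<in> ?LM" and sL: "s \<in> L" and sMM: "s \<subseteq> M" and ml: "pmeet l s"
      and alpha: "card {P \<in> qM_points L M. P \<subseteq> s} = \<alpha>" by (auto simp: lines_in_def)
    have ss: "vec.subspace s" using lin sL by auto
    obtain R where R: "R \<in> ppoints" "R \<subseteq> l" "R \<subseteq> s" using ml by (auto simp: pmeet_def)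
    have "R \<subseteq> ?P" using R sMM by auto
    hence RP: "R = ?P" using pdim_eq[OF R(1) P] by simp
    have Ps: "?P \<subseteq> s" using R RP by simp
    have ls_ne: "l \<noteq> s" using lM sMM by auto
    define G where "G = {s'\<in>?LM. s \<inter> s' \<subseteq> {0}}"
    have Gp: "\<forall>s'\<in>G. s' \<in> L \<and> s' \<subseteq> M \<and> l \<inter> s' \<subseteq> {0} \<and> (\<forall>t\<in>L. t \<subseteq> sp ?P s' \<longrightarrow> t = s')"
    proof
      fix s' assume s'G: "s' \<in> G"
      hence s'L: "s' \<in> L" "s' \<subseteq> M" and ss': "s \<inter> s' \<subseteq> {0}" by (auto simp: G_def lines_in_def)
      have ls': "l \<inter> s' \<subseteq> {0}" using ss' Ps s'L by auto
      have "\<forall>t\<in>L. t \<subseteq> sp ?P s' \<longrightarrow> t = s'"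
      proof (intro ballI impI)
        fix t assume t: "t \<in> L" "t \<subseteq> sp ?P s'"
        show "t = s'"
        proof (rule ccontr)
          assume "t \<noteq> s'"
          then obtain v x0 where v: "v \<in> L" "v \<subseteq> M" "?P \<subseteq> v" "x0 \<noteq> 0" "x0 \<in> v" "x0 \<in> s'"
            using H1_gen[OF sM l P s'L ls' t] by blast
          have vs: "v \<noteq> s" using v ss' by auto
          have "l \<subseteq> sp v s" using coplanar[OF P v(1) sL l v(3) Ps Pl vs] .
          also have "sp v s \<subseteq> M" using sM v sMM by (intro sp_least) auto
          finally show False using lM by simp
        qed
      qed
      thus "s' \<in> L \<and> s' \<subseteq> M \<and> l \<inter> s' \<subseteq> {0} \<and> (\<forall>t\<in>L. t \<subseteq> sp ?P s' \<longrightarrow> t = s')"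
        using s'L ls' by blast
    qed
    let ?U = "\<Union>s'\<in>G. TT M l s'"
    have cU: "(?q - 1) * card G \<le> card ?U" using count_union[OF sM l P Gp] .
    define E where "E = {t\<in>L. ?P \<subseteq> t} - {l, s}"
    have cE: "card E = ?q - 1"
      using ptcard[OF P l Pl] l sL Pl Ps ls_ne unfolding E_def by (simp add: card_Diff_subset)
    have UL: "?U \<subseteq> L" by (auto simp: TT_def)
    have EL: "E \<subseteq> L" by (auto simp: E_def)
    have U1: "?U \<inter> ?LM = {}" by (auto simp: TT_def lines_in_def)
    have U2: "l \<notin> ?U" using p0 by (auto simp: TT_def)
    have E1: "E \<inter> ?LM = {}"
    proof (rule ccontr)
      assume "E \<inter> ?LM \<noteq> {}"
      then obtain t where t: "t \<in> L" "?P \<subseteq> t" "t \<noteq> l" "t \<noteq> s" "t \<subseteq> M"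
        by (auto simp: E_def lines_in_def)
      have "l \<subseteq> sp t s" using coplanar[OF P t(1) sL l t(2) Ps Pl t(4)] .
      also have "sp t s \<subseteq> M" using sM t sMM by (intro sp_least) auto
      finally show False using lM by simp
    qed
    have E2: "l \<notin> E" by (auto simp: E_def)
    have EU: "E \<inter> ?U = {}"
    proof (rule ccontr)
      assume "E \<inter> ?U \<noteq> {}"
      then obtain t where t: "?P \<subseteq> t" "l \<inter> t \<subseteq> {0}" by (auto simp: E_def TT_def)
      thus False using p0 by auto
    qed
    have "card (?LM \<union> insert l (E \<union> ?U)) = card ?LM + Suc (card E + card ?U)"
      using U1 U2 E1 E2 EU lnLM by (simp add: card_Un_disjoint Int_Un_distrib Int_Un_distrib2 Int_commute)
    moreover have "?LM \<union> insert l (E \<union> ?U) \<subseteq> L" using UL EL l by (auto simp: lines_in_def)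
    ultimately have cL: "card ?LM + Suc (card E + card ?U) \<le> card L" by (metis card_mono fin)
    let ?Qs = "{Y \<in> qM_points L M. Y \<subseteq> s}"
    have bad: "?LM - G \<subseteq> insert s (\<Union>Y\<in>?Qs. {t\<in>?LM. Y \<subseteq> t} - {s})"
    proof
      fix s' assume s'B: "s' \<in> ?LM - G"
      hence s'L: "s' \<in> L" "s' \<subseteq> M" and ss': "\<not> s \<inter> s' \<subseteq> {0}" by (auto simp: G_def lines_in_def)
      show "s' \<in> insert s (\<Union>Y\<in>?Qs. {t\<in>?LM. Y \<subseteq> t} - {s})"
      proof (cases "s' = s")
        case True thus ?thesis by simp
      next
        case False
        obtain x0 where x0: "x0 \<in> s" "x0 \<in> s'" "x0 \<noteq> 0" using ss' by auto
        let ?Y = "vec.span {x0}"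
        have Ypt: "?Y \<in> ppoints" using span1_pt[OF x0(3)] .
        have Ys: "?Y \<subseteq> s" "?Y \<subseteq> s'" using x0 ss lin[OF s'L(1)] by (auto simp: vec.span_minimal)
        have eqs: "{t\<in>?LM. ?Y \<subseteq> t} = {t\<in>L. ?Y \<subseteq> t}"
        proof
          show "{t\<in>L. ?Y \<subseteq> t} \<subseteq> {t\<in>?LM. ?Y \<subseteq> t}"
          proof
            fix t assume t: "t \<in> {t\<in>L. ?Y \<subseteq> t}"
            have "t \<subseteq> sp s s'" using coplanar[OF Ypt sL s'L(1) _ Ys _] t False by auto
            also have "sp s s' \<subseteq> M" using sM sMM s'L by (intro sp_least) auto
            finally show "t \<in> {t\<in>?LM. ?Y \<subseteq> t}" using t by (auto simp: lines_in_def)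
          qed
        qed (auto simp: lines_in_def)
        have "?Y \<in> ?Qs" using eqs ptcard[OF Ypt sL Ys(1)] Ypt Ys by (simp add: qM_points_def)
        moreover have "s' \<in> {t\<in>?LM. ?Y \<subseteq> t} - {s}" using s'B Ys False by auto
        ultimately show ?thesis by blast
      qed
    qed
    have cQ: "\<And>Y. Y \<in> ?Qs \<Longrightarrow> card ({t\<in>?LM. Y \<subseteq> t} - {s}) = ?q"
    proof -
      fix Y assume Y: "Y \<in> ?Qs"
      hence "card {t\<in>?LM. Y \<subseteq> t} = ?q + 1" "s \<in> {t\<in>?LM. Y \<subseteq> t}"
        using sLM by (auto simp: qM_points_def)
      thus "card ({t\<in>?LM. Y \<subseteq> t} - {s}) = ?q" by simp
    qed
    have "card (?LM - G) \<le> card (insert s (\<Union>Y\<in>?Qs. {t\<in>?LM. Y \<subseteq> t} - {s}))"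
      using bad by (intro card_mono) auto
    also have "\<dots> \<le> Suc (card (\<Union>Y\<in>?Qs. {t\<in>?LM. Y \<subseteq> t} - {s}))" by (rule card_ins_le)
    also have "card (\<Union>Y\<in>?Qs. {t\<in>?LM. Y \<subseteq> t} - {s}) \<le> (\<Sum>Y\<in>?Qs. card ({t\<in>?LM. Y \<subseteq> t} - {s}))"
      by (rule card_UN_le) simp
    also have "\<dots> = \<alpha> * ?q" using cQ alpha by simp
    finally have cbad: "card (?LM - G) \<le> Suc (\<alpha> * ?q)" by simp
    have "card ?LM \<le> card G + card (?LM - G)"
    proof -
      have "?LM = G \<union> (?LM - G)" by (auto simp: G_def)
      hence "card ?LM = card (G \<union> (?LM - G))" by simp
      also have "\<dots> \<le> card G + card (?LM - G)" by (rule card_Un_le)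
      finally show ?thesis .
    qed
    hence cG: "card ?LM \<le> card G + Suc (\<alpha> * ?q)" using cbad by linarith
    have aq: "\<alpha> \<le> ?q"
    proof -
      have Pnq: "?P \<notin> qM_points L M"
      proof
        assume "?P \<in> qM_points L M"
        hence c1: "card {t\<in>?LM. ?P \<subseteq> t} = ?q + 1" by (simp add: qM_points_def)
        have "{t\<in>?LM. ?P \<subseteq> t} \<subseteq> {t\<in>L. ?P \<subseteq> t} - {l}" using lnLM by (auto simp: lines_in_def)
        hence "card {t\<in>?LM. ?P \<subseteq> t} \<le> card ({t\<in>L. ?P \<subseteq> t} - {l})" by (intro card_mono) auto
        also have "\<dots> = ?q" using ptcard[OF P l Pl] l Pl by simp
        finally show False using c1 by simp
      qed
      have "?Qs \<subseteq> {Y\<in>ppoints. Y \<subseteq> s} - {?P}" using Pnq by (auto simp: qM_points_def)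
      hence "card ?Qs \<le> card ({Y\<in>ppoints. Y \<subseteq> s} - {?P})" by (intro card_mono) auto
      also have "\<dots> = card {Y\<in>ppoints. Y \<subseteq> s} - 1" using P Ps by simp
      also have "\<dots> \<le> ?q" using points_line_card[of s] lin[OF sL] by simp
      finally show ?thesis using alpha by simp
    qed
    define c where "c = card ?LM"
    define g where "g = card G"
    define Q where "Q = int ?q"
    have Q1: "Q \<ge> 2" using q2 by (simp add: Q_def)
    have n1: "c + Suc ((?q - 1) + (?q - 1) * g) \<le> card L" using cL cE cU unfolding c_def g_def by linarith
    hence n2: "int (c + Suc ((?q - 1) + (?q - 1) * g)) \<le> int (card L)" by (simp only: of_nat_le_iff)
    have qm: "int (?q - 1) = Q - 1" using q2 unfolding Q_def by (simp add: of_nat_diff)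
    have iL: "int (card L) \<ge> int c + Q + (Q - 1) * int g"
      using n2 qm by simp
    have "int (card ?LM) \<le> int (card G + Suc (\<alpha> * ?q))" using cG by (simp only: of_nat_le_iff)
    hence ig: "int g \<ge> int c - 1 - int \<alpha> * Q" unfolding c_def g_def Q_def by simp
    have "(Q - 1) * int g \<ge> (Q - 1) * (int c - 1 - int \<alpha> * Q)"
      using ig Q1 by (intro mult_left_mono) auto
    hence g1: "int (card L) \<ge> Q * int c - int \<alpha> * Q^2 + int \<alpha> * Q + 1"
      using iL by (simp add: algebra_simps power2_eq_square)
    have "int \<alpha> * (Q^2 - Q) \<le> Q * (Q^2 - Q)"
      using aq Q1 unfolding Q_def by (intro mult_right_mono) (auto simp: power2_eq_square)
    hence g2: "Q * int c - int \<alpha> * Q^2 + int \<alpha> * Q + 1 \<ge> Q * int c - Q^3 + Q^2 + 1"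
      by (simp add: algebra_simps power2_eq_square power3_eq_cube)
    show "int (card L) \<ge> int ?q * int (card ?LM) - int \<alpha> * int ?q^2 + int \<alpha> * int ?q + 1
          \<and> int ?q * int (card ?LM) - int \<alpha> * int ?q^2 + int \<alpha> * int ?q + 1
            \<ge> int ?q * int (card ?LM) - int ?q^3 + int ?q^2 + 1"
      using g1 g2 unfolding c_def Q_def by simp
  qed
  show ?thesis using partA partB by blast
qed


end
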